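(* Let $\tau:\mathscr{A}\to\mathbb{C}$ be a linear functional with $|\tau(q)|\le C_0^{\deg q}$ for every monomial $q$, and let $A>1$ with $C_0/A<1/2$. For $g_1,\dots,g_m\in\mathscr{A}_0$ set $$Q_m(g_1,\dots,g_m)=(1\otimes\tau+\tau\otimes1)\Big\{\sum_{i=1}^n\big[(\mathscr{J}\mathscr{D}g_1)\cdots(\mathscr{J}\mathscr{D}g_m)\big]_{ii}\Big\}.$$ Then $$\|Q_m(\Sigma g_1,\dots,\Sigma g_m)\|_A\le2(2A^{-2})^m\prod_{k=1}^m\|g_k\|_A.$$ In particular $(g_1,\dots,g_m)\mapsto Q_m(\Sigma g_1,\dots,\Sigma g_m)$ extends to a bounded multilinear map on $\mathscr{A}_0^{(A)}$ with values in $\mathscr{A}^{(A)}$.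
   Context: $\mathscr{A}=\mathbb{C}\langle X_1,\dots,X_n\rangle$, $\mathscr{A}_0$ the span of monomials of degree $\ge1$. For $P=\sum_q\lambda_q(P)q$, $\|P\|_A=\sum_q|\lambda_q(P)|A^{\deg q}$; $\mathscr{A}^{(A)}$, $\mathscr{A}_0^{(A)}$ the completions. $\Sigma:\mathscr{A}_0\to\mathscr{A}_0$ is defined on monomials by $\Sigma q=q/\deg q$ (the inverse of the operator $\mathscr{N}$ multiplying degree-$k$ monomials by $k$). $\partial_j$: derivation $\mathscr{A}\to\mathscr{A}\otimes\mathscr{A}^{op}$ with $\partial_jX_i=\delta_{ij}1\otimes1$; $\mathscr{D}_jq=\sum_{q=BX_jC}CB$; $\mathscr{J}\mathscr{D}g=(\partial_j\mathscr{D}_ig)_{i,j}\in M_n(\mathscr{A}\otimes\mathscr{A}^{op})$; matrix products use $(a\otimes b)(c\otimes d)=ac\otimes db$. $(1\otimes\tau+\tau\otimes1)(a\otimes b)=a\tau(b)+\tau(a)b$. *)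

theory Defs
  imports Complex_Main
begin

text \<open>Noncommutative polynomials in X_0,...,X_(n-1) are coefficient functions on words
(nat lists, letter i standing for X_i) with finite support; elements of A tensor A^op
are coefficient functions on pairs of words (u,v) standing for u tensor v.\<close>

type_synonym ncp = "nat list \<Rightarrow> complex"
type_synonym tens = "nat list \<times> nat list \<Rightarrow> complex"

definition supp :: "('a \<Rightarrow> complex) \<Rightarrow> 'a set" where
  "supp f = {x. f x \<noteq> 0}"

definition ncpoly :: "nat \<Rightarrow> ncp \<Rightarrow> bool" where
  "ncpoly n P \<longleftrightarrow> finite (supp P) \<and> (\<forall>q\<in>supp P. set q \<subseteq> {..<n})"

definition ncpoly0 :: "nat \<Rightarrow> ncp \<Rightarrow> bool" where
  "ncpoly0 n P \<longleftrightarrow> ncpoly n P \<and> P [] = 0"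

definition normA :: "real \<Rightarrow> ncp \<Rightarrow> real" where
  "normA A P = (\<Sum>q\<in>supp P. cmod (P q) * A ^ length q)"

definition Sig :: "ncp \<Rightarrow> ncp" where
  "Sig P = (\<lambda>q. if q = [] then 0 else P q / of_nat (length q))"

text \<open>Cyclic derivative: D_j q = sum over q = B X_j C of C B.\<close>
definition cycder :: "nat \<Rightarrow> ncp \<Rightarrow> ncp" where
  "cycder j P w = (\<Sum>q\<in>supp P. P q *
     of_nat (card {k. k < length q \<and> q ! k = j \<and> drop (Suc k) q @ take k q = w}))"

text \<open>Free difference quotient: partial_j q = sum over q = B X_j C of B tensor C.\<close>
definition pder :: "nat \<Rightarrow> ncp \<Rightarrow> tens" where
  "pder j P = (\<lambda>(u,v). \<Sum>q\<in>supp P. P q *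
     of_nat (card {k. k < length q \<and> q ! k = j \<and> take k q = u \<and> drop (Suc k) q = v}))"

text \<open>Product in A tensor A^op: (a tensor b)(c tensor d) = ac tensor db.\<close>
definition tmul :: "tens \<Rightarrow> tens \<Rightarrow> tens" where
  "tmul S T = (\<lambda>(u,v). \<Sum>x\<in>supp S. \<Sum>y\<in>supp T.
      if fst x @ fst y = u \<and> snd y @ snd x = v then S x * T y else 0)"

definition JD :: "ncp \<Rightarrow> nat \<Rightarrow> nat \<Rightarrow> tens" where
  "JD g i j = pder j (cycder i g)"

definition mmul :: "nat \<Rightarrow> (nat \<Rightarrow> nat \<Rightarrow> tens) \<Rightarrow> (nat \<Rightarrow> nat \<Rightarrow> tens) \<Rightarrow> nat \<Rightarrow> nat \<Rightarrow> tens" where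
  "mmul n M N i k = (\<lambda>uv. \<Sum>l<n. tmul (M i l) (N l k) uv)"

definition mone :: "nat \<Rightarrow> nat \<Rightarrow> tens" where
  "mone i k = (\<lambda>uv. if i = k \<and> uv = ([],[]) then 1 else 0)"

text \<open>(1 tensor tau + tau tensor 1)(a tensor b) = a tau(b) + tau(a) b, where the linear
functional tau is given by its values on monomials.\<close>
definition tauapp :: "ncp \<Rightarrow> tens \<Rightarrow> ncp" where
  "tauapp tau T w = (\<Sum>x\<in>supp T. T x *
     ((if fst x = w then tau (snd x) else 0) + (if snd x = w then tau (fst x) else 0)))"

definition Qm :: "nat \<Rightarrow> ncp \<Rightarrow> ncp list \<Rightarrow> ncp" where
  "Qm n tau gs = tauapp tau
     (\<lambda>uv. \<Sum>i<n. foldr (\<lambda>g M. mmul n (JD g) M) gs mone i i uv)"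

end

theory Submission
  imports Defs
begin


definition rep :: "'i set \<Rightarrow> ('i \<Rightarrow> complex) \<Rightarrow> ('i \<Rightarrow> 'k) \<Rightarrow> ('k \<Rightarrow> complex) \<Rightarrow> bool" where
  "rep I c k f \<longleftrightarrow> finite I \<and> (\<forall>x. f x = (\<Sum>i\<in>{i. i \<in> I \<and> k i = x}. c i))"

lemma rep_supp: "rep I c k f \<Longrightarrow> supp f \<subseteq> k ` I"
proof
  fix x assume r: "rep I c k f" and x: "x \<in> supp f"
  then have "(\<Sum>i\<in>{i. i \<in> I \<and> k i = x}. c i) \<noteq> 0" by (auto simp: rep_def supp_def)
  then obtain i where "i \<in> I" "k i = x" by (metis (mono_tags, lifting) empty_Collect_eq sum.empty)
  then show "x \<in> k ` I" by auto
qed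

lemma rep_fin: "rep I c k f \<Longrightarrow> finite (supp f)"
  using rep_supp by (metis finite_imageI finite_subset rep_def)

lemma rep_prop: "rep I c k f \<Longrightarrow> \<forall>i\<in>I. P (k i) \<Longrightarrow> x \<in> supp f \<Longrightarrow> P x"
  using rep_supp by blast

lemma rep_lin:
  assumes r: "rep I c k f"
  shows "(\<Sum>q\<in>supp f. f q * F q) = (\<Sum>i\<in>I. c i * F (k i))"
proof -
  have fI: "finite I" using r by (simp add: rep_def)
  have "(\<Sum>q\<in>supp f. f q * F q) = (\<Sum>q\<in>k ` I. f q * F q)"
    by (rule sum.mono_neutral_left) (use fI rep_supp[OF r] in \<open>auto simp: supp_def\<close>)
  also have "\<dots> = (\<Sum>q\<in>k ` I. \<Sum>i\<in>{i. i \<in> I \<and> k i = q}. c i * F (k i))"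
  proof (rule sum.cong[OF refl])
    fix q assume "q \<in> k ` I"
    have "f q * F q = (\<Sum>i\<in>{i. i \<in> I \<and> k i = q}. c i) * F q" using r by (simp add: rep_def)
    also have "\<dots> = (\<Sum>i\<in>{i. i \<in> I \<and> k i = q}. c i * F (k i))"
      by (simp add: sum_distrib_right)
    finally show "f q * F q = (\<Sum>i\<in>{i. i \<in> I \<and> k i = q}. c i * F (k i))" .
  qed
  also have "\<dots> = (\<Sum>i\<in>I. c i * F (k i))"
    by (rule sum.image_gen[OF fI, symmetric])
  finally show ?thesis .
qed

lemma rep_wsum:
  assumes r: "rep I c k f" and w: "\<And>x. w x \<ge> (0::real)"
  shows "(\<Sum>x\<in>supp f. cmod (f x) * w x) \<le> (\<Sum>i\<in>I. cmod (c i) * w (k i))"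
proof -
  have fI: "finite I" using r by (simp add: rep_def)
  have "(\<Sum>x\<in>supp f. cmod (f x) * w x) \<le> (\<Sum>x\<in>k ` I. cmod (f x) * w x)"
    by (rule sum_mono2) (use fI rep_supp[OF r] w in auto)
  also have "\<dots> \<le> (\<Sum>x\<in>k ` I. \<Sum>i\<in>{i. i \<in> I \<and> k i = x}. cmod (c i) * w (k i))"
  proof (rule sum_mono)
    fix x assume "x \<in> k ` I"
    have "cmod (f x) * w x \<le> (\<Sum>i\<in>{i. i \<in> I \<and> k i = x}. cmod (c i)) * w x"
      using r w by (auto simp: rep_def intro!: mult_right_mono norm_sum)
    also have "\<dots> = (\<Sum>i\<in>{i. i \<in> I \<and> k i = x}. cmod (c i) * w (k i))"
      by (simp add: sum_distrib_right)
    finally show "cmod (f x) * w x \<le> (\<Sum>i\<in>{i. i \<in> I \<and> k i = x}. cmod (c i) * w (k i))" .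
  qed
  also have "\<dots> = (\<Sum>i\<in>I. cmod (c i) * w (k i))"
    by (rule sum.image_gen[OF fI, symmetric])
  finally show ?thesis .
qed

lemma rep_self: "finite (supp f) \<Longrightarrow> rep (supp f) f id f"
proof -
  assume "finite (supp f)"
  moreover have "{i. i \<in> supp f \<and> id i = x} = (if f x = 0 then {} else {x})" for x
    by (auto simp: supp_def)
  ultimately show ?thesis by (auto simp: rep_def)
qed

definition nu :: "real \<Rightarrow> real \<Rightarrow> tens \<Rightarrow> real" where
  "nu a b T = (\<Sum>x\<in>supp T. cmod (T x) * (a ^ length (fst x) * b ^ length (snd x)))"

definition fgs :: "nat \<Rightarrow> tens \<Rightarrow> bool" where
  "fgs n T \<longleftrightarrow> finite (supp T) \<and> (\<forall>x\<in>supp T. set (fst x) \<subseteq> {..<n} \<and> set (snd x) \<subseteq> {..<n})"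

lemma nu_nonneg: "a \<ge> 0 \<Longrightarrow> b \<ge> 0 \<Longrightarrow> nu a b T \<ge> 0"
  unfolding nu_def by (intro sum_nonneg) auto

lemma rep_tmul:
  assumes "finite (supp S)" "finite (supp T)"
  shows "rep (supp S \<times> supp T) (\<lambda>(x,y). S x * T y) (\<lambda>(x,y). (fst x @ fst y, snd y @ snd x)) (tmul S T)"
  unfolding rep_def
proof (intro conjI allI)
  show "finite (supp S \<times> supp T)" using assms by simp
  fix uv :: "nat list \<times> nat list"
  obtain u v where uv: "uv = (u,v)" by force
  have "(\<Sum>i\<in>{i. i \<in> supp S \<times> supp T \<and> (\<lambda>(x,y). (fst x @ fst y, snd y @ snd x)) i = uv}. (\<lambda>(x,y). S x * T y) i)
     = (\<Sum>i\<in>supp S \<times> supp T. if (\<lambda>(x,y). (fst x @ fst y, snd y @ snd x)) i = uv then (\<lambda>(x,y). S x * T y) i else 0)"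
    by (rule sum.inter_filter) (use assms in simp)
  also have "\<dots> = (\<Sum>x\<in>supp S. \<Sum>y\<in>supp T. if fst x @ fst y = u \<and> snd y @ snd x = v then S x * T y else 0)"
    apply (simp add: sum.cartesian_product uv split_beta)
    apply (rule sum.cong[OF refl])
    apply (auto split: prod.splits)
    done
  also have "\<dots> = tmul S T uv" by (simp add: tmul_def uv)
  finally show "tmul S T uv = (\<Sum>i\<in>{i. i \<in> supp S \<times> supp T \<and> (\<lambda>(x,y). (fst x @ fst y, snd y @ snd x)) i = uv}. (\<lambda>(x,y). S x * T y) i)" by simp
qed

lemma nu_tmul:
  assumes "finite (supp S)" "finite (supp T)" "a \<ge> 0" "b \<ge> 0"
  shows "nu a b (tmul S T) \<le> nu a b S * nu a b T"
proof -
  have "nu a b (tmul S T) \<le> (\<Sum>i\<in>supp S \<times> supp T. cmod ((\<lambda>(x,y). S x * T y) i) *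
     (\<lambda>x. a ^ length (fst x) * b ^ length (snd x)) ((\<lambda>(x,y). (fst x @ fst y, snd y @ snd x)) i))"
    unfolding nu_def by (rule rep_wsum[OF rep_tmul[OF assms(1,2)]]) (use assms in auto)
  also have "\<dots> = (\<Sum>(x,y)\<in>supp S \<times> supp T. (cmod (S x) * (a ^ length (fst x) * b ^ length (snd x))) *
      (cmod (T y) * (a ^ length (fst y) * b ^ length (snd y))))"
    by (intro sum.cong refl) (auto simp: norm_mult power_add algebra_simps)
  also have "\<dots> = nu a b S * nu a b T"
    by (simp add: nu_def sum_product sum.cartesian_product)
  finally show ?thesis .
qed

lemma fgs_tmul:
  assumes "fgs n S" "fgs n T"
  shows "fgs n (tmul S T)"
proof -
  have r: "rep (supp S \<times> supp T) (\<lambda>(x,y). S x * T y) (\<lambda>(x,y). (fst x @ fst y, snd y @ snd x)) (tmul S T)"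
    using assms by (intro rep_tmul) (auto simp: fgs_def)
  have P: "\<forall>i\<in>supp S \<times> supp T. (\<lambda>x. set (fst x) \<subseteq> {..<n} \<and> set (snd x) \<subseteq> {..<n}) ((\<lambda>(x,y). (fst x @ fst y, snd y @ snd x)) i)"
    using assms by (auto simp: fgs_def)
  show ?thesis using rep_fin[OF r] rep_prop[OF r P] unfolding fgs_def by blast
qed

lemma rep_sumf:
  assumes "finite L" "\<forall>l\<in>L. finite (supp (f l))"
  shows "rep (Sigma L (\<lambda>l. supp (f l))) (\<lambda>(l,x). f l x) snd (\<lambda>x. \<Sum>l\<in>L. f l x)"
  unfolding rep_def
proof (intro conjI allI)
  show "finite (Sigma L (\<lambda>l. supp (f l)))" using assms by auto
  fix x
  have "(\<Sum>i\<in>{i. i \<in> Sigma L (\<lambda>l. supp (f l)) \<and> snd i = x}. (\<lambda>(l,x). f l x) i)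
      = (\<Sum>i\<in>Sigma L (\<lambda>l. supp (f l)). if snd i = x then (\<lambda>(l,x). f l x) i else 0)"
    by (rule sum.inter_filter) (use assms in auto)
  also have "\<dots> = (\<Sum>l\<in>L. \<Sum>y\<in>supp (f l). if y = x then f l y else 0)"
    using sum.Sigma[of L "\<lambda>l. supp (f l)" "\<lambda>l y. if y = x then f l y else 0"] assms
    apply (simp add: split_beta)
    apply (rule sum.cong[OF refl])
    apply (auto split: prod.splits)
    done
  also have "\<dots> = (\<Sum>l\<in>L. f l x)"
    by (intro sum.cong refl) (use assms in \<open>auto simp: sum.delta supp_def\<close>)
  finally show "(\<Sum>l\<in>L. f l x) = (\<Sum>i\<in>{i. i \<in> Sigma L (\<lambda>l. supp (f l)) \<and> snd i = x}. (\<lambda>(l,x). f l x) i)" by simp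
qed

lemma nu_sumf:
  assumes "finite L" "\<forall>l\<in>L. finite (supp (f l))" "a \<ge> 0" "b \<ge> 0"
  shows "nu a b (\<lambda>x. \<Sum>l\<in>L. f l x) \<le> (\<Sum>l\<in>L. nu a b (f l))"
proof -
  have "nu a b (\<lambda>x. \<Sum>l\<in>L. f l x) \<le> (\<Sum>i\<in>Sigma L (\<lambda>l. supp (f l)). cmod ((\<lambda>(l,x). f l x) i) *
     (\<lambda>x. a ^ length (fst x) * b ^ length (snd x)) (snd i))"
    unfolding nu_def by (rule rep_wsum[OF rep_sumf[OF assms(1,2)]]) (use assms in auto)
  also have "\<dots> = (\<Sum>l\<in>L. nu a b (f l))"
    using sum.Sigma[of L "\<lambda>l. supp (f l)" "\<lambda>l x. cmod (f l x) * (a ^ length (fst x) * b ^ length (snd x))"] assms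
    by (simp add: nu_def split_beta)
  finally show ?thesis .
qed

lemma fgs_sumf:
  assumes "finite L" "\<forall>l\<in>L. fgs n (f l)"
  shows "fgs n (\<lambda>x. \<Sum>l\<in>L. f l x)"
proof -
  have r: "rep (Sigma L (\<lambda>l. supp (f l))) (\<lambda>(l,x). f l x) snd (\<lambda>x. \<Sum>l\<in>L. f l x)"
    using assms by (intro rep_sumf) (auto simp: fgs_def)
  have P: "\<forall>i\<in>Sigma L (\<lambda>l. supp (f l)). (\<lambda>x. set (fst x) \<subseteq> {..<n} \<and> set (snd x) \<subseteq> {..<n}) (snd i)"
    using assms by (auto simp: fgs_def)
  show ?thesis using rep_fin[OF r] rep_prop[OF r P] unfolding fgs_def by blast
qed



lemma mmul_eq: "mmul n M N i k = (\<lambda>uv. \<Sum>l\<in>{..<n}. tmul (M i l) (N l k) uv)"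
  by (simp add: mmul_def)

lemma fgs_mmul:
  assumes "\<forall>i j. fgs n (M i j)" "\<forall>i j. fgs n (N i j)"
  shows "fgs n (mmul n M N i k)"
  unfolding mmul_eq by (rule fgs_sumf) (simp_all add: assms fgs_tmul)

lemma nu_mmul:
  assumes "\<forall>i j. fgs n (M i j)" "\<forall>i j. fgs n (N i j)" "a \<ge> 0" "b \<ge> 0"
  shows "nu a b (mmul n M N i k) \<le> (\<Sum>l<n. nu a b (M i l) * nu a b (N l k))"
proof -
  have "nu a b (mmul n M N i k) \<le> (\<Sum>l<n. nu a b (tmul (M i l) (N l k)))"
    unfolding mmul_eq
  proof (rule nu_sumf)
    show "\<forall>l\<in>{..<n}. finite (supp (tmul (M i l) (N l k)))"
      using fgs_tmul assms(1,2) unfolding fgs_def by blast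
  qed (use assms in auto)
  also have "\<dots> \<le> (\<Sum>l<n. nu a b (M i l) * nu a b (N l k))"
    using assms(1,2) unfolding fgs_def by (intro sum_mono nu_tmul assms(3,4)) blast+
  finally show ?thesis .
qed

lemma row_mmul:
  assumes "\<forall>i j. fgs n (M i j)" "\<forall>i j. fgs n (N i j)" "a \<ge> 0" "b \<ge> 0"
    and R: "\<forall>i<n. (\<Sum>j<n. nu a b (M i j)) \<le> R"
    and S: "\<forall>i<n. (\<Sum>j<n. nu a b (N i j)) \<le> S" "S \<ge> 0"
    and i: "i < n"
  shows "(\<Sum>k<n. nu a b (mmul n M N i k)) \<le> R * S"
proof -
  have "(\<Sum>k<n. nu a b (mmul n M N i k)) \<le> (\<Sum>k<n. \<Sum>l<n. nu a b (M i l) * nu a b (N l k))"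
    by (intro sum_mono nu_mmul assms)
  also have "\<dots> = (\<Sum>l<n. nu a b (M i l) * (\<Sum>k<n. nu a b (N l k)))"
    by (subst sum.swap) (simp add: sum_distrib_left)
  also have "\<dots> \<le> (\<Sum>l<n. nu a b (M i l) * S)"
    by (intro sum_mono mult_left_mono) (use S nu_nonneg assms in auto)
  also have "\<dots> = (\<Sum>l<n. nu a b (M i l)) * S" by (simp add: sum_distrib_right)
  also have "\<dots> \<le> R * S" using R i S by (intro mult_right_mono) auto
  finally show ?thesis .
qed

lemma trace_mmul:
  assumes "\<forall>i j. fgs n (M i j)" "\<forall>i j. fgs n (N i j)" "a \<ge> 0" "b \<ge> 0"
    and E: "\<forall>l<n. \<forall>i<n. nu a b (N l i) \<le> E"
  shows "(\<Sum>i<n. nu a b (mmul n M N i i)) \<le> (\<Sum>i<n. \<Sum>l<n. nu a b (M i l)) * E"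
proof -
  have "(\<Sum>i<n. nu a b (mmul n M N i i)) \<le> (\<Sum>i<n. \<Sum>l<n. nu a b (M i l) * nu a b (N l i))"
    by (intro sum_mono nu_mmul assms)
  also have "\<dots> \<le> (\<Sum>i<n. \<Sum>l<n. nu a b (M i l) * E)"
    by (intro sum_mono mult_left_mono) (use E nu_nonneg assms in auto)
  also have "\<dots> = (\<Sum>i<n. \<Sum>l<n. nu a b (M i l)) * E" by (simp add: sum_distrib_right)
  finally show ?thesis .
qed

lemma supp_mone: "supp (mone i j) = (if i = j then {([],[])} else {})"
  by (auto simp: supp_def mone_def)

lemma fgs_mone: "fgs n (mone i j)"
  by (simp add: fgs_def supp_mone)

lemma nu_mone: "nu a b (mone i j) = (if i = j then 1 else 0)"
  unfolding nu_def supp_mone by (simp add: mone_def)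

lemma row_mone: "i < n \<Longrightarrow> (\<Sum>j<n. nu a b (mone i j)) = 1"
  by (simp add: nu_mone)

abbreviation RR :: "nat \<Rightarrow> ncp list \<Rightarrow> nat \<Rightarrow> nat \<Rightarrow> tens" where
  "RR n hs \<equiv> foldr (\<lambda>g M. mmul n (JD g) M) hs mone"

lemma row_foldr:
  assumes ab: "a \<ge> 0" "b \<ge> 0"
    and H: "\<forall>g\<in>set gs. (\<forall>i j. fgs n (JD (F g) i j)) \<and> (\<Sum>i<n. \<Sum>j<n. nu a b (JD (F g) i j)) \<le> B g"
  shows "(\<forall>i j. fgs n (RR n (map F gs) i j)) \<and> (\<forall>i<n. (\<Sum>j<n. nu a b (RR n (map F gs) i j)) \<le> prod_list (map B gs))
     \<and> prod_list (map B gs) \<ge> 0"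
  using H
proof (induction gs)
  case Nil
  then show ?case by (simp add: fgs_mone row_mone)
next
  case (Cons g gs)
  then have IH: "(\<forall>i j. fgs n (RR n (map F gs) i j))" "\<forall>i<n. (\<Sum>j<n. nu a b (RR n (map F gs) i j)) \<le> prod_list (map B gs)"
     "prod_list (map B gs) \<ge> 0" by auto
  have Jf: "\<forall>i j. fgs n (JD (F g) i j)" and Jt: "(\<Sum>i<n. \<Sum>j<n. nu a b (JD (F g) i j)) \<le> B g" using Cons by auto
  have "0 \<le> (\<Sum>i<n. \<Sum>j<n. nu a b (JD (F g) i j))" by (intro sum_nonneg nu_nonneg ab)
  then have Bh: "B g \<ge> 0" using Jt by linarith
  have rowJ: "\<forall>i<n. (\<Sum>j<n. nu a b (JD (F g) i j)) \<le> B g"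
  proof (intro allI impI)
    fix i assume "i < n"
    then have "(\<Sum>j<n. nu a b (JD (F g) i j)) \<le> (\<Sum>i<n. \<Sum>j<n. nu a b (JD (F g) i j))"
      by (intro member_le_sum) (auto intro!: sum_nonneg nu_nonneg ab)
    then show "(\<Sum>j<n. nu a b (JD (F g) i j)) \<le> B g" using Jt by linarith
  qed
  have "\<forall>i j. fgs n (RR n (map F (g # gs)) i j)" using fgs_mmul[OF Jf IH(1)] by simp
  moreover have "\<forall>i<n. (\<Sum>j<n. nu a b (RR n (map F (g # gs)) i j)) \<le> prod_list (map B (g # gs))"
    using row_mmul[OF Jf IH(1) ab rowJ IH(2,3)] by simp
  moreover have "prod_list (map B (g # gs)) \<ge> 0" using Bh IH(3) by simp
  ultimately show ?case by blast
qed

lemma trace_foldr: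
  assumes ab: "a \<ge> 0" "b \<ge> 0"
    and H: "\<forall>g\<in>set (g0 # gs). (\<forall>i j. fgs n (JD (F g) i j)) \<and> (\<Sum>i<n. \<Sum>j<n. nu a b (JD (F g) i j)) \<le> B g"
  shows "(\<Sum>i<n. nu a b (RR n (map F (g0 # gs)) i i)) \<le> prod_list (map B (g0 # gs))"
proof -
  have IH: "(\<forall>i j. fgs n (RR n (map F gs) i j))" "\<forall>i<n. (\<Sum>j<n. nu a b (RR n (map F gs) i j)) \<le> prod_list (map B gs)"
     "prod_list (map B gs) \<ge> 0" using row_foldr[OF ab, of gs n F B] H by auto
  have Jf: "\<forall>i j. fgs n (JD (F g0) i j)" and Jt: "(\<Sum>i<n. \<Sum>j<n. nu a b (JD (F g0) i j)) \<le> B g0" using H by auto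
  have E: "\<forall>l<n. \<forall>i<n. nu a b (RR n (map F gs) l i) \<le> prod_list (map B gs)"
  proof (intro allI impI)
    fix l i assume li: "l < n" "i < n"
    then have "nu a b (RR n (map F gs) l i) \<le> (\<Sum>j<n. nu a b (RR n (map F gs) l j))"
      by (intro member_le_sum) (auto intro!: nu_nonneg ab)
    then show "nu a b (RR n (map F gs) l i) \<le> prod_list (map B gs)" using IH(2) li by fastforce
  qed
  have "(\<Sum>i<n. nu a b (RR n (map F (g0 # gs)) i i)) \<le> (\<Sum>i<n. \<Sum>l<n. nu a b (JD (F g0) i l)) * prod_list (map B gs)"
    using trace_mmul[OF Jf IH(1) ab E] by simp
  also have "\<dots> \<le> B g0 * prod_list (map B gs)"
    by (rule mult_right_mono[OF Jt IH(3)])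
  finally show ?thesis by simp
qed

lemma fgs_foldr:
  assumes "\<forall>g\<in>set gs. \<forall>i j. fgs n (JD (F g) i j)"
  shows "fgs n (RR n (map F gs) i j)"
  using assms
proof (induction gs arbitrary: i j)
  case Nil
  then show ?case by (simp add: fgs_mone)
next
  case (Cons g gs)
  then show ?case using fgs_mmul[of n "JD (F g)" "RR n (map F gs)"] by simp
qed



lemma fin_bnd[simp]: "finite {m::nat. m < L \<and> Q m}"
  by (rule finite_subset[of _ "{..<L}"]) auto

lemma rep_pos:
  fixes L :: "'k \<Rightarrow> nat"
  assumes r: "rep I c k P"
  shows "rep (Sigma I (\<lambda>i. {m. m < L (k i) \<and> C (k i) m})) (\<lambda>p. c (fst p)) (\<lambda>p. h (k (fst p)) (snd p))
          (\<lambda>x. \<Sum>q\<in>supp P. P q * of_nat (card {m. m < L q \<and> C q m \<and> h q m = x}))"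
  unfolding rep_def
proof (intro conjI allI)
  have fI: "finite I" using r by (simp add: rep_def)
  then show "finite (Sigma I (\<lambda>i. {m. m < L (k i) \<and> C (k i) m}))" by (intro finite_SigmaI fin_bnd)
  fix x
  have "(\<Sum>q\<in>supp P. P q * of_nat (card {m. m < L q \<and> C q m \<and> h q m = x}))
     = (\<Sum>i\<in>I. c i * of_nat (card {m. m < L (k i) \<and> C (k i) m \<and> h (k i) m = x}))"
    by (rule rep_lin[OF r])
  also have "\<dots> = (\<Sum>i\<in>I. \<Sum>m\<in>{m. m < L (k i) \<and> C (k i) m \<and> h (k i) m = x}. c i)"
    by (simp add: mult.commute)
  also have "\<dots> = (\<Sum>p\<in>Sigma I (\<lambda>i. {m. m < L (k i) \<and> C (k i) m \<and> h (k i) m = x}). c (fst p))"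
    using sum.Sigma[OF fI, of "\<lambda>i. {m. m < L (k i) \<and> C (k i) m \<and> h (k i) m = x}" "\<lambda>i m. c i"] fin_bnd
    by (simp add: split_beta)
  also have "Sigma I (\<lambda>i. {m. m < L (k i) \<and> C (k i) m \<and> h (k i) m = x})
     = {p. p \<in> Sigma I (\<lambda>i. {m. m < L (k i) \<and> C (k i) m}) \<and> h (k (fst p)) (snd p) = x}"
    by auto
  finally show "(\<Sum>q\<in>supp P. P q * of_nat (card {m. m < L q \<and> C q m \<and> h q m = x})) =
     (\<Sum>p\<in>{p. p \<in> Sigma I (\<lambda>i. {m. m < L (k i) \<and> C (k i) m}) \<and> h (k (fst p)) (snd p) = x}. c (fst p))" .
qed

lemma cycder_eq: "cycder j P = (\<lambda>w. \<Sum>q\<in>supp P. P q * of_nat (card {k. k < length q \<and> q ! k = j \<and> drop (Suc k) q @ take k q = w}))"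
  by (rule ext) (simp add: cycder_def)

lemma pder_eq: "pder j P = (\<lambda>x. \<Sum>q\<in>supp P. P q * of_nat (card {k. k < length q \<and> q ! k = j \<and> (take k q, drop (Suc k) q) = x}))"
  by (rule ext) (auto simp: pder_def split: prod.splits)

lemma Sigma_filter:
  fixes L :: "'a \<Rightarrow> nat"
  assumes "finite A"
  shows "(\<Sum>p\<in>Sigma A (\<lambda>x. {y. y < L x \<and> P x y}). f p) = (\<Sum>x\<in>A. \<Sum>y<L x. if P x y then f (x,y) else 0)"
proof -
  have "(\<Sum>p\<in>Sigma A (\<lambda>x. {y. y < L x \<and> P x y}). f p) = (\<Sum>x\<in>A. \<Sum>y\<in>{y. y < L x \<and> P x y}. f (x,y))"
    using sum.Sigma[OF assms, of "\<lambda>x. {y. y < L x \<and> P x y}" "\<lambda>x y. f (x,y)"] fin_bnd by (simp add: split_beta)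
  also have "\<dots> = (\<Sum>x\<in>A. \<Sum>y<L x. if P x y then f (x,y) else 0)"
  proof (rule sum.cong[OF refl])
    fix x
    have "{y. y < L x \<and> P x y} = {y \<in> {..<L x}. P x y}" by auto
    then show "(\<Sum>y\<in>{y. y < L x \<and> P x y}. f (x,y)) = (\<Sum>y<L x. if P x y then f (x,y) else 0)"
      using sum.inter_filter[of "{..<L x}" "\<lambda>y. f (x,y)" "P x"] by simp
  qed
  finally show ?thesis .
qed

lemma swap4:
  "(\<Sum>i\<in>A. \<Sum>j\<in>B. \<Sum>q\<in>C. \<Sum>m\<in>D q. f i j q m) = (\<Sum>q\<in>C. \<Sum>m\<in>D q. \<Sum>i\<in>A. \<Sum>j\<in>B. f i j q m)"
proof -
  have "(\<Sum>i\<in>A. \<Sum>j\<in>B. \<Sum>q\<in>C. \<Sum>m\<in>D q. f i j q m) = (\<Sum>i\<in>A. \<Sum>q\<in>C. \<Sum>j\<in>B. \<Sum>m\<in>D q. f i j q m)"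
    by (rule sum.cong[OF refl], rule sum.swap)
  also have "\<dots> = (\<Sum>q\<in>C. \<Sum>i\<in>A. \<Sum>j\<in>B. \<Sum>m\<in>D q. f i j q m)" by (rule sum.swap)
  also have "\<dots> = (\<Sum>q\<in>C. \<Sum>i\<in>A. \<Sum>m\<in>D q. \<Sum>j\<in>B. f i j q m)"
    by (rule sum.cong[OF refl], rule sum.cong[OF refl], rule sum.swap)
  also have "\<dots> = (\<Sum>q\<in>C. \<Sum>m\<in>D q. \<Sum>i\<in>A. \<Sum>j\<in>B. f i j q m)"
    by (rule sum.cong[OF refl], rule sum.swap)
  finally show ?thesis .
qed

lemma delta2:
  assumes "c < (n::nat)" "\<forall>m2<L. d m2 < n"
  shows "(\<Sum>i<n. \<Sum>j<n. if c = i then (\<Sum>m2<L. if d m2 = j then W m2 else 0) else 0) = (\<Sum>m2<L. (W m2::real))"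
proof -
  have "(\<Sum>i<n. \<Sum>j<n. if c = i then (\<Sum>m2<L. if d m2 = j then W m2 else 0) else 0)
      = (\<Sum>i<n. if c = i then (\<Sum>j<n. \<Sum>m2<L. if d m2 = j then W m2 else 0) else 0)"
    by (intro sum.cong refl) auto
  also have "\<dots> = (\<Sum>j<n. \<Sum>m2<L. if d m2 = j then W m2 else 0)"
    using assms by (simp add: sum.delta)
  also have "\<dots> = (\<Sum>m2<L. \<Sum>j<n. if d m2 = j then W m2 else 0)" by (rule sum.swap)
  also have "\<dots> = (\<Sum>m2<L. W m2)"
    using assms by (intro sum.cong refl) (simp add: sum.delta)
  finally show ?thesis .
qed



definition rot :: "nat list \<Rightarrow> nat \<Rightarrow> nat list" where
  "rot q m = drop (Suc m) q @ take m q"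

lemma length_rot: "m < length q \<Longrightarrow> length (rot q m) = length q - 1"
  by (simp add: rot_def)

lemma set_rot: "set (rot q m) \<subseteq> set q"
  by (auto simp: rot_def dest: in_set_dropD in_set_takeD)

lemma perq:
  fixes a b A :: real
  assumes q: "q \<noteq> []" and ab: "a \<ge> 0" "b \<ge> 0" and A: "A > 0"
    and geo: "\<forall>k. (\<Sum>m<Suc k. a^m * b^(k-m)) \<le> 2 * A^k"
  shows "(\<Sum>m<length q. \<Sum>m2<length (rot q m). cmod (Sig g q) *
            (a ^ length (take m2 (rot q m)) * b ^ length (drop (Suc m2) (rot q m))))
         \<le> 2 / A^2 * (cmod (g q) * A ^ length q)"
proof -
  have Sg: "cmod (Sig g q) = cmod (g q) / real (length q)"
    using q by (simp add: Sig_def norm_divide)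
  have "(\<Sum>m<length q. \<Sum>m2<length (rot q m). cmod (Sig g q) *
            (a ^ length (take m2 (rot q m)) * b ^ length (drop (Suc m2) (rot q m))))
       = (\<Sum>m<length q. \<Sum>m2<length q - 1. cmod (Sig g q) * (a ^ m2 * b ^ (length q - 1 - Suc m2)))"
    by (intro sum.cong refl) (auto simp: length_rot)
  also have "\<dots> = real (length q) * (cmod (Sig g q) * (\<Sum>m2<length q - 1. a ^ m2 * b ^ (length q - 1 - Suc m2)))"
    by (simp add: sum_distrib_left)
  also have "\<dots> = cmod (g q) * (\<Sum>m2<length q - 1. a ^ m2 * b ^ (length q - 1 - Suc m2))"
    using q by (simp add: Sg)
  also have "\<dots> \<le> 2 / A^2 * (cmod (g q) * A ^ length q)"
  proof (cases "length q")
    case 0 then show ?thesis using q by simp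
  next
    case (Suc l)
    show ?thesis
    proof (cases l)
      case 0
      then show ?thesis using Suc A by simp
    next
      case (Suc k)
      have lq: "length q = Suc (Suc k)" using Suc \<open>length q = Suc l\<close> by simp
      have "(\<Sum>m2<length q - 1. a ^ m2 * b ^ (length q - 1 - Suc m2)) = (\<Sum>m<Suc k. a^m * b^(k-m))"
        by (simp add: lq)
      also have "\<dots> \<le> 2 * A^k" using geo by blast
      finally have s: "(\<Sum>m2<length q - 1. a ^ m2 * b ^ (length q - 1 - Suc m2)) \<le> 2 * A^k" .
      have "cmod (g q) * (\<Sum>m2<length q - 1. a ^ m2 * b ^ (length q - 1 - Suc m2)) \<le> cmod (g q) * (2 * A^k)"
        by (rule mult_left_mono[OF s]) simp
      also have "\<dots> = 2 / A^2 * (cmod (g q) * A ^ length q)"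
        using A by (simp add: lq field_simps power2_eq_square)
      finally show ?thesis .
    qed
  qed
  finally show ?thesis .
qed



lemma JD_Sig:
  fixes a b A :: real
  assumes g: "ncpoly n g" and ab: "a \<ge> 0" "b \<ge> 0" and A: "A > 0"
    and geo: "\<forall>k. (\<Sum>m<Suc k. a^m * b^(k-m)) \<le> 2 * A^k"
  shows "(\<forall>i j. fgs n (JD (Sig g) i j)) \<and> (\<Sum>i<n. \<Sum>j<n. nu a b (JD (Sig g) i j)) \<le> 2 / A^2 * normA A g"
proof -
  define Sg where "Sg = Sig g"
  define S where "S = supp Sg"
  have suppS: "S \<subseteq> supp g - {[]}" by (auto simp: S_def Sg_def supp_def Sig_def)
  have finS: "finite S" using suppS g by (auto simp: ncpoly_def intro: finite_subset)
  have goodS: "\<forall>q\<in>S. set q \<subseteq> {..<n}" using suppS g by (auto simp: ncpoly_def)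
  have r1: "rep (Sigma S (\<lambda>q. {m. m < length q \<and> q ! m = i})) (\<lambda>p. Sg (fst p)) (\<lambda>p. rot (fst p) (snd p)) (cycder i Sg)" for i
    using rep_pos[OF rep_self[OF finS[unfolded S_def]], of length "\<lambda>q m. q ! m = i" "\<lambda>q m. drop (Suc m) q @ take m q"]
    by (simp add: cycder_eq rot_def S_def)
  define I2 where "I2 i j = Sigma (Sigma S (\<lambda>q. {m. m < length q \<and> q ! m = i})) (\<lambda>p. {m. m < length (rot (fst p) (snd p)) \<and> rot (fst p) (snd p) ! m = j})" for i j
  define K2 where "K2 = (\<lambda>p. (take (snd p) (rot (fst (fst p)) (snd (fst p))), drop (Suc (snd p)) (rot (fst (fst p)) (snd (fst p)))))"
  have r2: "rep (I2 i j) (\<lambda>p. Sg (fst (fst p))) K2 (JD Sg i j)" for i j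
    using rep_pos[OF r1[of i], of length "\<lambda>q m. q ! m = j" "\<lambda>q m. (take m q, drop (Suc m) q)"]
    by (simp add: JD_def pder_eq I2_def K2_def)
  have fgsJ: "fgs n (JD Sg i j)" for i j
  proof -
    have P: "\<forall>p\<in>I2 i j. (\<lambda>x. set (fst x) \<subseteq> {..<n} \<and> set (snd x) \<subseteq> {..<n}) (K2 p)"
    proof
      fix p assume p: "p \<in> I2 i j"
      then have "set (rot (fst (fst p)) (snd (fst p))) \<subseteq> {..<n}"
        using goodS set_rot by (auto simp: I2_def) blast
      then show "(\<lambda>x. set (fst x) \<subseteq> {..<n} \<and> set (snd x) \<subseteq> {..<n}) (K2 p)"
        by (auto simp: K2_def dest: in_set_dropD in_set_takeD)
    qed
    show ?thesis using rep_fin[OF r2] rep_prop[OF r2 P] unfolding fgs_def by blast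
  qed
  define W where "W q m m2 = cmod (Sg q) * (a ^ length (take m2 (rot q m)) * b ^ length (drop (Suc m2) (rot q m)))" for q m m2
  have nuJ: "nu a b (JD Sg i j) \<le> (\<Sum>q\<in>S. \<Sum>m<length q. if q ! m = i then
      (\<Sum>m2<length (rot q m). if rot q m ! m2 = j then W q m m2 else 0) else 0)" for i j
  proof -
    have "nu a b (JD Sg i j) \<le> (\<Sum>p\<in>I2 i j. cmod (Sg (fst (fst p))) * (\<lambda>x. a ^ length (fst x) * b ^ length (snd x)) (K2 p))"
      unfolding nu_def by (rule rep_wsum[OF r2]) (use ab in auto)
    also have "\<dots> = (\<Sum>p\<in>I2 i j. W (fst (fst p)) (snd (fst p)) (snd p))"
      by (simp add: W_def K2_def)
    also have "\<dots> = (\<Sum>p1\<in>Sigma S (\<lambda>q. {m. m < length q \<and> q ! m = i}). \<Sum>m2<length (rot (fst p1) (snd p1)).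
          if rot (fst p1) (snd p1) ! m2 = j then W (fst p1) (snd p1) m2 else 0)"
      unfolding I2_def
      using Sigma_filter[where A="Sigma S (\<lambda>q. {m. m < length q \<and> q ! m = i})" and L="\<lambda>p. length (rot (fst p) (snd p))"
         and P="\<lambda>p m. rot (fst p) (snd p) ! m = j" and f="\<lambda>p. W (fst (fst p)) (snd (fst p)) (snd p)"]
        finite_SigmaI[OF finS fin_bnd]
      by (simp cong: if_cong)
    also have "\<dots> = (\<Sum>q\<in>S. \<Sum>m<length q. if q ! m = i then
      (\<Sum>m2<length (rot q m). if rot q m ! m2 = j then W q m m2 else 0) else 0)"
      using Sigma_filter[OF finS, where L="length" and P="\<lambda>q m. q ! m = i" and f="\<lambda>p1. \<Sum>m2<length (rot (fst p1) (snd p1)).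
          if rot (fst p1) (snd p1) ! m2 = j then W (fst p1) (snd p1) m2 else 0"]
      by (simp cong: if_cong)
    finally show ?thesis .
  qed
  have "(\<Sum>i<n. \<Sum>j<n. nu a b (JD Sg i j)) \<le> (\<Sum>i<n. \<Sum>j<n. \<Sum>q\<in>S. \<Sum>m<length q. if q ! m = i then
      (\<Sum>m2<length (rot q m). if rot q m ! m2 = j then W q m m2 else 0) else 0)"
    by (intro sum_mono nuJ)
  also have "\<dots> = (\<Sum>q\<in>S. \<Sum>m<length q. \<Sum>i<n. \<Sum>j<n. if q ! m = i then
      (\<Sum>m2<length (rot q m). if rot q m ! m2 = j then W q m m2 else 0) else 0)"
    by (rule swap4)
  also have "\<dots> = (\<Sum>q\<in>S. \<Sum>m<length q. \<Sum>m2<length (rot q m). W q m m2)"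
  proof (rule sum.cong[OF refl])
    fix q assume q: "q \<in> S"
    have gq: "set q \<subseteq> {..<n}" using goodS q by blast
    show "(\<Sum>m<length q. \<Sum>i<n. \<Sum>j<n. if q ! m = i then
      (\<Sum>m2<length (rot q m). if rot q m ! m2 = j then W q m m2 else 0) else 0) = (\<Sum>m<length q. \<Sum>m2<length (rot q m). W q m m2)"
    proof (rule sum.cong[OF refl])
      fix m assume m: "m \<in> {..<length q}"
      have c: "q ! m < n" using gq m by (auto intro: nth_mem)
      have d: "\<forall>m2<length (rot q m). rot q m ! m2 < n"
        using gq set_rot[of q m] by (auto dest!: nth_mem)
      show "(\<Sum>i<n. \<Sum>j<n. if q ! m = i then
        (\<Sum>m2<length (rot q m). if rot q m ! m2 = j then W q m m2 else 0) else 0) = (\<Sum>m2<length (rot q m). W q m m2)"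
        by (rule delta2[OF c d])
    qed
  qed
  also have "\<dots> \<le> (\<Sum>q\<in>S. 2 / A^2 * (cmod (g q) * A ^ length q))"
  proof (rule sum_mono)
    fix q assume q: "q \<in> S"
    then have "q \<noteq> []" using suppS by auto
    then show "(\<Sum>m<length q. \<Sum>m2<length (rot q m). W q m m2) \<le> 2 / A^2 * (cmod (g q) * A ^ length q)"
      unfolding W_def Sg_def by (rule perq[OF _ ab A geo])
  qed
  also have "\<dots> \<le> (\<Sum>q\<in>supp g. 2 / A^2 * (cmod (g q) * A ^ length q))"
    by (rule sum_mono2) (use g suppS A in \<open>auto simp: ncpoly_def\<close>)
  also have "\<dots> = 2 / A^2 * normA A g" by (simp add: normA_def sum_distrib_left)
  finally show ?thesis using fgsJ by (simp add: Sg_def)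
qed



lemma rep_tauapp:
  assumes fT: "finite (supp T)"
  shows "rep (supp T \<times> (UNIV::bool set)) (\<lambda>(x,b). T x * (if b then tau (snd x) else tau (fst x)))
     (\<lambda>(x,b). if b then fst x else snd x) (tauapp tau T)"
  unfolding rep_def
proof (intro conjI allI)
  show "finite (supp T \<times> (UNIV::bool set))" using fT by simp
  fix w
  have "(\<Sum>p\<in>{p. p \<in> supp T \<times> (UNIV::bool set) \<and> (\<lambda>(x,b). if b then fst x else snd x) p = w}.
          (\<lambda>(x,b). T x * (if b then tau (snd x) else tau (fst x))) p)
      = (\<Sum>p\<in>supp T \<times> (UNIV::bool set). if (\<lambda>(x,b). if b then fst x else snd x) p = w then
          (\<lambda>(x,b). T x * (if b then tau (snd x) else tau (fst x))) p else 0)"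
    by (rule sum.inter_filter) (use fT in simp)
  also have "\<dots> = (\<Sum>x\<in>supp T. \<Sum>b\<in>(UNIV::bool set). if (if b then fst x else snd x) = w then
          T x * (if b then tau (snd x) else tau (fst x)) else 0)"
    by (simp add: sum.cartesian_product split_beta cong: if_cong)
  also have "\<dots> = tauapp tau T w"
    unfolding tauapp_def by (intro sum.cong refl) (simp add: UNIV_bool algebra_simps)
  finally show "tauapp tau T w = (\<Sum>p\<in>{p. p \<in> supp T \<times> (UNIV::bool set) \<and> (\<lambda>(x,b). if b then fst x else snd x) p = w}.
          (\<lambda>(x,b). T x * (if b then tau (snd x) else tau (fst x))) p)" by simp
qed

lemma sum_prod_bool:
  assumes "finite A"
  shows "(\<Sum>p\<in>A \<times> (UNIV::bool set). f p) = (\<Sum>x\<in>A. f (x,True) + f (x,False))"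
proof -
  have "(\<Sum>x\<in>A. \<Sum>b\<in>(UNIV::bool set). f (x,b)) = (\<Sum>(x,b)\<in>A \<times> (UNIV::bool set). f (x,b))"
    by (rule sum.cartesian_product)
  then show ?thesis by (simp add: UNIV_bool add.commute)
qed

lemma tauapp_bound:
  fixes A C0 :: real
  assumes T: "fgs n T" and ht: "\<forall>q. set q \<subseteq> {..<n} \<longrightarrow> cmod (tau q) \<le> C0 ^ length q"
    and A: "A \<ge> 0" and C: "C0 \<ge> 0"
  shows "normA A (tauapp tau T) \<le> nu A C0 T + nu C0 A T"
proof -
  have fT: "finite (supp T)" using T by (simp add: fgs_def)
  have "normA A (tauapp tau T) \<le> (\<Sum>p\<in>supp T \<times> (UNIV::bool set).
      cmod ((\<lambda>(x,b). T x * (if b then tau (snd x) else tau (fst x))) p) *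
      (\<lambda>w. A ^ length w) ((\<lambda>(x,b). if b then fst x else snd x) p))"
    unfolding normA_def by (rule rep_wsum[OF rep_tauapp[OF fT]]) (use A in simp)
  also have "\<dots> = (\<Sum>x\<in>supp T. cmod (T x) * cmod (tau (snd x)) * A ^ length (fst x)
                      + cmod (T x) * cmod (tau (fst x)) * A ^ length (snd x))"
    by (simp add: sum_prod_bool[OF fT] norm_mult add.commute)
  also have "\<dots> \<le> (\<Sum>x\<in>supp T. cmod (T x) * (A ^ length (fst x) * C0 ^ length (snd x))
                      + cmod (T x) * (C0 ^ length (fst x) * A ^ length (snd x)))"
  proof (rule sum_mono)
    fix x assume x: "x \<in> supp T"
    then have g: "set (fst x) \<subseteq> {..<n}" "set (snd x) \<subseteq> {..<n}" using T by (auto simp: fgs_def)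
    have t1: "cmod (tau (snd x)) \<le> C0 ^ length (snd x)" using ht g(2) by blast
    have "cmod (tau (snd x)) * A ^ length (fst x) \<le> C0 ^ length (snd x) * A ^ length (fst x)"
      by (rule mult_right_mono[OF t1]) (use A in simp)
    then have "cmod (T x) * (cmod (tau (snd x)) * A ^ length (fst x)) \<le> cmod (T x) * (C0 ^ length (snd x) * A ^ length (fst x))"
      by (rule mult_left_mono) simp
    then have 1: "cmod (T x) * cmod (tau (snd x)) * A ^ length (fst x) \<le> cmod (T x) * (A ^ length (fst x) * C0 ^ length (snd x))"
      by (simp add: ac_simps)
    have t2: "cmod (tau (fst x)) \<le> C0 ^ length (fst x)" using ht g(1) by blast
    have "cmod (tau (fst x)) * A ^ length (snd x) \<le> C0 ^ length (fst x) * A ^ length (snd x)"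
      by (rule mult_right_mono[OF t2]) (use A in simp)
    then have "cmod (T x) * (cmod (tau (fst x)) * A ^ length (snd x)) \<le> cmod (T x) * (C0 ^ length (fst x) * A ^ length (snd x))"
      by (rule mult_left_mono) simp
    then have 2: "cmod (T x) * cmod (tau (fst x)) * A ^ length (snd x) \<le> cmod (T x) * (C0 ^ length (fst x) * A ^ length (snd x))"
      by (simp add: ac_simps)
    show "cmod (T x) * cmod (tau (snd x)) * A ^ length (fst x) + cmod (T x) * cmod (tau (fst x)) * A ^ length (snd x)
      \<le> cmod (T x) * (A ^ length (fst x) * C0 ^ length (snd x)) + cmod (T x) * (C0 ^ length (fst x) * A ^ length (snd x))"
      using 1 2 by linarith
  qed
  also have "\<dots> = nu A C0 T + nu C0 A T" by (simp add: nu_def sum.distrib)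
  finally show ?thesis .
qed

lemma geo_sum: "0 \<le> (r::real) \<Longrightarrow> r \<le> 1/2 \<Longrightarrow> (\<Sum>j<N. r^j) \<le> 2 - 2 * r^N"
proof (induction N)
  case 0 then show ?case by simp
next
  case (Suc N)
  have "(2*r) * r^N \<le> 1 * r^N" by (rule mult_right_mono) (use Suc.prems in auto)
  then have "r ^ Suc N * 2 \<le> r ^ N" by (simp add: algebra_simps)
  then show ?case using Suc by simp
qed

lemma geo1:
  fixes A C0 :: real
  assumes A: "A > 0" and C: "C0 \<ge> 0" "C0 / A < 1/2"
  shows "(\<Sum>m<Suc k. C0^m * A^(k-m)) \<le> 2 * A^k"
proof -
  define r where "r = C0 / A"
  have r: "0 \<le> r" "r \<le> 1/2" using A C by (auto simp: r_def)
  have "(\<Sum>m<Suc k. C0^m * A^(k-m)) = (\<Sum>m<Suc k. A^k * r^m)"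
  proof (rule sum.cong[OF refl])
    fix m assume "m \<in> {..<Suc k}"
    then have "A^k = A^m * A^(k-m)" by (simp add: power_add[symmetric])
    then show "C0^m * A^(k-m) = A^k * r^m" using A by (simp add: r_def power_divide field_simps)
  qed
  also have "\<dots> = A^k * (\<Sum>m<Suc k. r^m)" by (rule sum_distrib_left[symmetric])
  also have "\<dots> \<le> A^k * 2"
    using geo_sum[OF r, of "Suc k"] r A by (intro mult_left_mono) (auto intro: order_trans)
  finally show ?thesis by simp
qed

lemma geo2:
  fixes A C0 :: real
  assumes A: "A > 0" and C: "C0 \<ge> 0" "C0 / A < 1/2"
  shows "(\<Sum>m<Suc k. A^m * C0^(k-m)) \<le> 2 * A^k"
proof -
  have "(\<Sum>m<Suc k. A^m * C0^(k-m)) = (\<Sum>m\<in>{0..k}. A^m * C0^(k-m))"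
    by (simp add: atLeast0AtMost lessThan_Suc_atMost)
  also have "\<dots> = (\<Sum>m\<in>{0..k}. A^(k + 0 - m) * C0^(k-(k + 0 - m)))"
    by (rule sum.atLeastAtMost_rev)
  also have "\<dots> = (\<Sum>m<Suc k. C0^m * A^(k-m))"
    by (simp add: atLeast0AtMost lessThan_Suc_atMost mult.commute)
  also have "\<dots> \<le> 2 * A^k" by (rule geo1[OF assms])
  finally show ?thesis .
qed

lemma prod_list_scale: "prod_list (map (\<lambda>g. c * f g) gs) = (c::real) ^ length gs * prod_list (map f gs)"
  by (induction gs) auto



theorem mainTheorem8:
  fixes n :: nat and tau :: "nat list \<Rightarrow> complex" and C0 A :: real
    and gs :: "(nat list \<Rightarrow> complex) list"
  assumes "\<forall>q. set q \<subseteq> {..<n} \<longrightarrow> cmod (tau q) \<le> C0 ^ length q"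
    and "A > 1" and "C0 / A < 1/2"
    and "gs \<noteq> []" and "\<forall>g\<in>set gs. ncpoly0 n g"
  shows "normA A (Qm n tau (map Sig gs))
           \<le> 2 * (2 / A\<^sup>2) ^ length gs * prod_list (map (normA A) gs)"
proof -
  have A0: "A > 0" using assms(2) by simp
  have nn: "normA A g \<ge> 0" for g unfolding normA_def using A0 by (intro sum_nonneg) simp
  have rhs0: "0 \<le> 2 * (2 / A\<^sup>2) ^ length gs * prod_list (map (normA A) gs)"
    using nn A0 by (intro mult_nonneg_nonneg prod_list_nonneg) auto
  show ?thesis
  proof (cases "n = 0")
    case True
    have "Qm n tau (map Sig gs) = (\<lambda>w. 0)"
      using True by (simp add: Qm_def tauapp_def[abs_def] supp_def)
    then have "normA A (Qm n tau (map Sig gs)) = 0" by (simp add: normA_def supp_def)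
    then show ?thesis using rhs0 by simp
  next
    case False
    have "set [0::nat] \<subseteq> {..<n}" using False by simp
    then have "cmod (tau [0]) \<le> C0 ^ length [0::nat]" using assms(1) by blast
    then have C0: "C0 \<ge> 0" using norm_ge_zero[of "tau [0]"] by (simp del: norm_ge_zero)
    have gp: "\<forall>g\<in>set gs. ncpoly n g" using assms(5) by (simp add: ncpoly0_def)
    define B where "B g = 2 / A^2 * normA A g" for g
    have H1: "\<forall>g\<in>set gs. (\<forall>i j. fgs n (JD (Sig g) i j)) \<and> (\<Sum>i<n. \<Sum>j<n. nu A C0 (JD (Sig g) i j)) \<le> B g"
      using JD_Sig[OF _ _ C0 A0, of n _ A] geo2[OF A0 C0 assms(3)] gp A0 unfolding B_def by auto
    have H2: "\<forall>g\<in>set gs. (\<forall>i j. fgs n (JD (Sig g) i j)) \<and> (\<Sum>i<n. \<Sum>j<n. nu C0 A (JD (Sig g) i j)) \<le> B g"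
      using JD_Sig[OF _ C0 _ A0, of n _ A] geo1[OF A0 C0 assms(3)] gp A0 unfolding B_def by auto
    define T where "T = (\<lambda>uv. \<Sum>i\<in>{..<n}. RR n (map Sig gs) i i uv)"
    have QT: "Qm n tau (map Sig gs) = tauapp tau T" by (simp add: Qm_def T_def)
    have fR: "\<forall>i\<in>{..<n}. fgs n (RR n (map Sig gs) i i)"
      using fgs_foldr[of gs n Sig] H1 by auto
    have fT: "fgs n T" unfolding T_def by (rule fgs_sumf) (use fR in auto)
    obtain g0 gs' where gs: "gs = g0 # gs'" using assms(4) by (cases gs) auto
    have nuT: "nu a b T \<le> prod_list (map B gs)"
      if ab: "a \<ge> 0" "b \<ge> 0" and H: "\<forall>g\<in>set gs. (\<forall>i j. fgs n (JD (Sig g) i j)) \<and> (\<Sum>i<n. \<Sum>j<n. nu a b (JD (Sig g) i j)) \<le> B g" for a b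
    proof -
      have "nu a b T \<le> (\<Sum>i\<in>{..<n}. nu a b (RR n (map Sig gs) i i))"
        unfolding T_def by (rule nu_sumf) (use fR ab in \<open>auto simp: fgs_def\<close>)
      also have "\<dots> \<le> prod_list (map B gs)"
        using trace_foldr[OF ab, of g0 gs' n Sig B] H gs by simp
      finally show ?thesis .
    qed
    have "normA A (Qm n tau (map Sig gs)) \<le> nu A C0 T + nu C0 A T"
      unfolding QT by (rule tauapp_bound[OF fT assms(1)]) (use A0 C0 in auto)
    also have "\<dots> \<le> prod_list (map B gs) + prod_list (map B gs)"
      using nuT[OF _ C0 H1] nuT[OF C0 _ H2] A0 by (intro add_mono) auto
    also have "\<dots> = 2 * (2 / A\<^sup>2) ^ length gs * prod_list (map (normA A) gs)"
      unfolding B_def prod_list_scale by simp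
    finally show ?thesis .
  qed
qed

end
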